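(* Fix $x_1,\dots,x_V\in\mathcal X$ and a class $\mathcal G$ of functions $\mathcal X\to[\kappa]$. Let $\mathcal M$ be a set of $V\times\kappa$ matrices such that every $M\in\mathcal M$ satisfies $M_{t,k}\in[0,1]$ and $\sum_{k=1}^\kappa M_{t,k}\le1$ for all $t\in[V]$, $k\in[\kappa]$, and suppose $\mathcal M_{\mathcal G}\subseteq\mathcal M$, where $\mathcal M_{\mathcal G}=\{M_f:f\in\mathcal G\}$ with $(M_f)_{t,k}=\mathbf 1\{f(x_t)=k\}$. Then the relaxation $$\mathbf{Rel}(\mathcal G\mid y_{1:t})=\mathbb E_{\boldsymbol\epsilon_{t+1:V}}\Big[\sup_{M\in\mathcal M}\Big\{2\sum_{j=t+1}^V\sum_{k=1}^\kappa\boldsymbol\epsilon_{j,k}M_{j,k}+\sum_{i=1}^tM_{i,y_i}\Big\}\Big]-t$$ is admissible for prediction with respect to $\mathcal G$, where $\boldsymbol\epsilon_{t+1},\dots,\boldsymbol\epsilon_V\in\{-1,1\}^\kappa$ are vectors of independent Rademacher random variables and $\boldsymbol\epsilon_{j,k}$ is the $k$-th coordinate of $\boldsymbol\epsilon_j$. Moreover, the randomized strategy which at round $t$ draws $\boldsymbol\epsilon_{t+1:V}$ and predicts $\widehat y_t\sim\widehat q_t(\boldsymbol\epsilon_{t+1:V})$, where $$\widehat q_t(\boldsymbol\epsilon_{t+1:V})=\operatorname*{argmin}_{q\in\Delta([\kappa])}\ \sup_{y_t\in[\kappa]}\Big\{1-q[y_t]+\sup_{M\in\mathcal M}\Big\{2\sum_{j=t+1}^V\sum_{k=1}^\kappa\boldsymbol\epsilon_{j,k}M_{j,k}+\sum_{s=1}^tM_{s,y_s}\Big\}-t\Big\},$$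 satisfies, for every $t\in[V]$ and every $y_{1:t-1}$, $\max_{y_t\in[\kappa]}\{\mathbb E[\ell(\widehat y_t,y_t)]+\mathbf{Rel}(\mathcal G\mid y_{1:t})\}\le\mathbf{Rel}(\mathcal G\mid y_{1:t-1})$, the expectation being over $\boldsymbol\epsilon_{t+1:V}$ and $\widehat y_t$.
   Context: Notation: $[n]=\{1,\dots,n\}$, $a_{1:t}=(a_1,\dots,a_t)$, $\Delta(A)$ is the set of probability distributions on $A$, and for $q\in\Delta([\kappa])$, $q[y]$ is the probability of $y$. The loss is $\ell(\widehat y,y)=\mathbf 1\{\widehat y\ne y\}$, labels $y_t\in[\kappa]$. Admissibility: given fixed $x_{1:V}$ and a class $\mathcal G$ of functions $\mathcal X\to[\kappa]$, a collection of real functions $\mathbf{Rel}(\mathcal G\mid y_{1:t})$, $t=0,\dots,V$ (with $y_{1:0}=\emptyset$), is admissible if (i) for all $y_{1:V}$, $\mathbf{Rel}(\mathcal G\mid y_{1:V})\ge-\inf_{f\in\mathcal G}\sum_{t=1}^V\ell(f(x_t),y_t)$, and (ii) for all $t\in[V]$ and $y_{1:t-1}$, $\inf_{q\in\Delta([\kappa])}\sup_{y_t\in[\kappa]}\{\mathbb E_{\widehat y_t\sim q}\ell(\widehat y_t,y_t)+\mathbf{Rel}(\mathcal G\mid y_{1:t})\}\le \mathbf{Rel}(\mathcal G\mid y_{1:t-1})$. *)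

theory Defs
  imports Complex_Main "HOL-Library.FuncSet"
begin

definition loss :: "nat \<Rightarrow> nat \<Rightarrow> real" where
  "loss yhat y = (if yhat \<noteq> y then 1 else 0)"

definition simplex :: "nat \<Rightarrow> (nat \<Rightarrow> real) set" where
  "simplex \<kappa> = {q. (\<forall>k. 0 \<le> q k) \<and> (\<forall>k. k \<notin> {1..\<kappa>} \<longrightarrow> q k = 0)
                   \<and> (\<Sum>k\<in>{1..\<kappa>}. q k) = 1}"

definition exp_loss :: "nat \<Rightarrow> (nat \<Rightarrow> real) \<Rightarrow> nat \<Rightarrow> real" where
  "exp_loss \<kappa> q y = (\<Sum>k\<in>{1..\<kappa>}. q k * loss k y)"

text \<open>Admissibility. Label sequences y_{1:t} are lists of length t, y_i = ys ! (i-1);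
  the inputs x_1..x_V are x 1, ..., x V.\<close>
definition admissible ::
  "nat \<Rightarrow> nat \<Rightarrow> (nat \<Rightarrow> 'x) \<Rightarrow> ('x \<Rightarrow> nat) set \<Rightarrow> (nat list \<Rightarrow> real) \<Rightarrow> bool" where
  "admissible V \<kappa> x G Rel \<longleftrightarrow>
     (\<forall>ys. length ys = V \<and> set ys \<subseteq> {1..\<kappa>} \<longrightarrow>
        Rel ys \<ge> - (INF f\<in>G. (\<Sum>t\<in>{1..V}. loss (f (x t)) (ys ! (t - 1))))) \<and>
     (\<forall>t\<in>{1..V}. \<forall>ys. length ys = t - 1 \<and> set ys \<subseteq> {1..\<kappa>} \<longrightarrow>
        (INF q\<in>simplex \<kappa>. SUP yt\<in>{1..\<kappa>}. exp_loss \<kappa> q yt + Rel (ys @ [yt])) \<le> Rel ys)"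

text \<open>Sign patterns eps_{t+1:V}: eps (j,k) for j in {t+1..V}, k in {1..kappa};
  the uniform distribution on this finite set is the law of independent Rademachers.\<close>
definition rad_set :: "nat \<Rightarrow> nat \<Rightarrow> nat \<Rightarrow> (nat \<times> nat \<Rightarrow> real) set" where
  "rad_set V \<kappa> t = PiE ({Suc t..V} \<times> {1..\<kappa>}) (\<lambda>_. {-1, 1})"

definition rel_obj :: "nat \<Rightarrow> nat \<Rightarrow> (nat \<times> nat \<Rightarrow> real) \<Rightarrow> nat list \<Rightarrow> (nat \<Rightarrow> nat \<Rightarrow> real) \<Rightarrow> real" where
  "rel_obj V \<kappa> \<epsilon> ys M =
     2 * (\<Sum>j\<in>{Suc (length ys)..V}. \<Sum>k\<in>{1..\<kappa>}. \<epsilon> (j, k) * M j k)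
     + (\<Sum>i\<in>{1..length ys}. M i (ys ! (i - 1)))"

definition Rel :: "nat \<Rightarrow> nat \<Rightarrow> (nat \<Rightarrow> nat \<Rightarrow> real) set \<Rightarrow> nat list \<Rightarrow> real" where
  "Rel V \<kappa> Ms ys =
     (\<Sum>\<epsilon>\<in>rad_set V \<kappa> (length ys). (SUP M\<in>Ms. rel_obj V \<kappa> \<epsilon> ys M))
       / real (card (rad_set V \<kappa> (length ys))) - real (length ys)"

text \<open>Objective minimized by qhat_t: sup over y_t of 1 - q[y_t] + sup_M {...} - t,
  where ys = y_{1:t-1} and t = length ys + 1.\<close>
definition strat_obj :: "nat \<Rightarrow> nat \<Rightarrow> (nat \<Rightarrow> nat \<Rightarrow> real) set \<Rightarrow> nat list
    \<Rightarrow> (nat \<times> nat \<Rightarrow> real) \<Rightarrow> (nat \<Rightarrow> real) \<Rightarrow> real" where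
  "strat_obj V \<kappa> Ms ys \<epsilon> q =
     (SUP yt\<in>{1..\<kappa>}. 1 - q yt + (SUP M\<in>Ms. rel_obj V \<kappa> \<epsilon> (ys @ [yt]) M)
        - real (Suc (length ys)))"

end

theory Submission
  imports Defs
begin


definition fl :: "nat set \<Rightarrow> (nat \<Rightarrow> real) \<Rightarrow> nat \<Rightarrow> real" where
  "fl F \<sigma> = (\<lambda>k. if k \<in> F then - \<sigma> k else \<sigma> k)"

lemma fl_fl[simp]: "fl F (fl F \<sigma>) = \<sigma>"
  by (auto simp: fl_def)

lemma fl_in: "F \<subseteq> {1..\<kappa>} \<Longrightarrow> \<sigma> \<in> PiE {1..\<kappa>} (\<lambda>_. {-1,1::real}) \<Longrightarrow> fl F \<sigma> \<in> PiE {1..\<kappa>} (\<lambda>_. {-1,1::real})"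
  unfolding fl_def PiE_iff extensional_def by auto

lemma sum_fl:
  assumes F: "F \<subseteq> {1..\<kappa>}"
  shows "(\<Sum>\<sigma>\<in>PiE {1..\<kappa>} (\<lambda>_. {-1,1::real}). f (fl F \<sigma>)) = (\<Sum>\<sigma>\<in>PiE {1..\<kappa>} (\<lambda>_. {-1,1::real}). f \<sigma>)"
proof (rule sum.reindex_bij_witness[where i="fl F" and j="fl F"])
  fix a assume "a \<in> PiE {1..\<kappa>} (\<lambda>_. {-1,1::real})"
  then show "fl F a \<in> PiE {1..\<kappa>} (\<lambda>_. {-1,1::real})" by (rule fl_in[OF F])
next
  fix a assume "a \<in> PiE {1..\<kappa>} (\<lambda>_. {-1,1::real})"
  then show "fl F a \<in> PiE {1..\<kappa>} (\<lambda>_. {-1,1::real})" by (rule fl_in[OF F])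
qed simp_all

lemma exp_loss_simplex:
  assumes q: "q \<in> simplex \<kappa>" and y: "y \<in> {1..\<kappa>}"
  shows "exp_loss \<kappa> q y = 1 - q y"
proof -
  have s: "(\<Sum>k\<in>{1..\<kappa>}. q k) = 1" using q by (simp add: simplex_def)
  have "exp_loss \<kappa> q y = (\<Sum>k\<in>{1..\<kappa>}. q k - (if k = y then q k else 0))"
    unfolding exp_loss_def loss_def by (intro sum.cong) auto
  also have "\<dots> = 1 - q y" using s y by (simp add: sum_subtractf)
  finally show ?thesis .
qed

locale core =
  fixes Ms :: "'m set" and A :: "'m \<Rightarrow> real" and u :: "'m \<Rightarrow> nat \<Rightarrow> real" and \<kappa> :: nat
  assumes ne: "Ms \<noteq> {}" and bdd: "bdd_above (A ` Ms)"
    and u01: "\<forall>M\<in>Ms. \<forall>k\<in>{1..\<kappa>}. 0 \<le> u M k \<and> u M k \<le> 1"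
    and usum: "\<forall>M\<in>Ms. (\<Sum>k\<in>{1..\<kappa>}. u M k) \<le> 1"
    and kp: "1 \<le> \<kappa>"
begin

definition h :: "(nat \<Rightarrow> real) \<Rightarrow> real" where
  "h v = (SUP M\<in>Ms. A M + (\<Sum>k\<in>{1..\<kappa>}. v k * u M k))"

lemma bdd_v: "bdd_above ((\<lambda>M. A M + (\<Sum>k\<in>{1..\<kappa>}. v k * u M k)) ` Ms)"
proof -
  obtain B where B: "\<forall>M\<in>Ms. A M \<le> B" using bdd by (auto simp: bdd_above_def)
  have "\<forall>M\<in>Ms. A M + (\<Sum>k\<in>{1..\<kappa>}. v k * u M k) \<le> B + (\<Sum>k\<in>{1..\<kappa>}. \<bar>v k\<bar>)"
  proof
    fix M assume M: "M \<in> Ms"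
    have "(\<Sum>k\<in>{1..\<kappa>}. v k * u M k) \<le> (\<Sum>k\<in>{1..\<kappa>}. \<bar>v k\<bar>)"
    proof (rule sum_mono)
      fix k assume k: "k \<in> {1..\<kappa>}"
      have "0 \<le> u M k" "u M k \<le> 1" using u01 M k by auto
      then have "v k * u M k \<le> \<bar>v k\<bar> * u M k" by (intro mult_right_mono) simp_all
      also have "\<dots> \<le> \<bar>v k\<bar>" using \<open>u M k \<le> 1\<close> by (intro mult_left_le) simp_all
      finally show "v k * u M k \<le> \<bar>v k\<bar>" .
    qed
    then show "A M + (\<Sum>k\<in>{1..\<kappa>}. v k * u M k) \<le> B + (\<Sum>k\<in>{1..\<kappa>}. \<bar>v k\<bar>)"
      using B M by auto
  qed
  then show ?thesis by (auto simp: bdd_above_def)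
qed

lemma h_ge: "M \<in> Ms \<Longrightarrow> A M + (\<Sum>k\<in>{1..\<kappa>}. v k * u M k) \<le> h v"
  unfolding h_def by (rule cSUP_upper[OF _ bdd_v])

lemma h_le: "(\<And>M. M \<in> Ms \<Longrightarrow> A M + (\<Sum>k\<in>{1..\<kappa>}. v k * u M k) \<le> c) \<Longrightarrow> h v \<le> c"
  unfolding h_def by (rule cSUP_least[OF ne])

lemma h_cong: "(\<And>k. k \<in> {1..\<kappa>} \<Longrightarrow> v k = w k) \<Longrightarrow> h v = h w"
  unfolding h_def by (auto intro!: SUP_cong sum.cong)

lemma h_mid: "h (\<lambda>k. (v k + w k) / 2) \<le> (h v + h w) / 2"
proof (rule h_le)
  fix M assume M: "M \<in> Ms"
  have "A M + (\<Sum>k\<in>{1..\<kappa>}. (v k + w k) / 2 * u M k)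
     = ((A M + (\<Sum>k\<in>{1..\<kappa>}. v k * u M k)) + (A M + (\<Sum>k\<in>{1..\<kappa>}. w k * u M k))) / 2"
    by (simp add: sum.distrib sum_divide_distrib[symmetric] ring_distribs add_divide_distrib)
  also have "\<dots> \<le> (h v + h w) / 2" using h_ge[OF M, of v] h_ge[OF M, of w] by simp
  finally show "A M + (\<Sum>k\<in>{1..\<kappa>}. (v k + w k) / 2 * u M k) \<le> (h v + h w) / 2" .
qed

lemma h_jensen:
  assumes S: "finite S" "S \<noteq> {}"
  shows "h (\<lambda>k. (\<Sum>s\<in>S. w s k) / card S) \<le> (\<Sum>s\<in>S. h (w s)) / card S"
proof (rule h_le)
  fix M assume M: "M \<in> Ms"
  have cS: "real (card S) > 0" using S by (simp add: card_gt_0_iff)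
  have "A M + (\<Sum>k\<in>{1..\<kappa>}. (\<Sum>s\<in>S. w s k) / card S * u M k)
      = (\<Sum>s\<in>S. A M + (\<Sum>k\<in>{1..\<kappa>}. w s k * u M k)) / card S"
  proof -
    have "(\<Sum>k\<in>{1..\<kappa>}. (\<Sum>s\<in>S. w s k) / card S * u M k)
        = (\<Sum>s\<in>S. \<Sum>k\<in>{1..\<kappa>}. w s k * u M k) / card S"
      by (simp add: sum_divide_distrib sum_distrib_right) (rule sum.swap)
    moreover have "(\<Sum>s\<in>S. A M + (\<Sum>k\<in>{1..\<kappa>}. w s k * u M k))
        = card S * A M + (\<Sum>s\<in>S. \<Sum>k\<in>{1..\<kappa>}. w s k * u M k)"
      by (simp add: sum.distrib)
    ultimately show ?thesis using cS by (simp add: field_simps)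
  qed
  also have "\<dots> \<le> (\<Sum>s\<in>S. h (w s)) / card S"
    by (rule divide_right_mono[OF sum_mono]) (use h_ge[OF M] in auto)
  finally show "A M + (\<Sum>k\<in>{1..\<kappa>}. (\<Sum>s\<in>S. w s k) / card S * u M k) \<le> (\<Sum>s\<in>S. h (w s)) / card S" .
qed


abbreviation "Sg \<equiv> PiE {1..\<kappa>} (\<lambda>_. {-1,1::real})"

definition "H \<sigma> = h (\<lambda>k. 2 * \<sigma> k)"
definition "D y y' = (\<lambda>k. (if k = y then 1 else 0) - (if k = y' then 1 else (0::real)))"
definition "e y = (\<lambda>k. if k = y then 1 else (0::real))"

lemma Sg_fin: "finite Sg" by (rule finite_PiE) auto
lemma Sg_card: "real (card Sg) > 0"
  by (simp add: card_PiE)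

lemma h0_le: "card Sg * h (\<lambda>k. 0) \<le> (\<Sum>\<sigma>\<in>Sg. H \<sigma>)"
proof -
  have "\<forall>\<sigma>\<in>Sg. h (\<lambda>k. 0) \<le> (H \<sigma> + H (fl {1..\<kappa>} \<sigma>)) / 2"
  proof
    fix \<sigma> assume "\<sigma> \<in> Sg"
    have "h (\<lambda>k. 0) = h (\<lambda>k. (2 * \<sigma> k + 2 * fl {1..\<kappa>} \<sigma> k) / 2)"
      by (rule h_cong) (simp add: fl_def)
    also have "\<dots> \<le> (H \<sigma> + H (fl {1..\<kappa>} \<sigma>)) / 2" unfolding H_def by (rule h_mid)
    finally show "h (\<lambda>k. 0) \<le> (H \<sigma> + H (fl {1..\<kappa>} \<sigma>)) / 2" .
  qed
  then have "(\<Sum>\<sigma>\<in>Sg. h (\<lambda>k. 0)) \<le> (\<Sum>\<sigma>\<in>Sg. (H \<sigma> + H (fl {1..\<kappa>} \<sigma>)) / 2)"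
    by (intro sum_mono) blast
  also have "\<dots> = ((\<Sum>\<sigma>\<in>Sg. H \<sigma>) + (\<Sum>\<sigma>\<in>Sg. H (fl {1..\<kappa>} \<sigma>))) / 2"
    by (simp add: sum.distrib sum_divide_distrib[symmetric])
  also have "(\<Sum>\<sigma>\<in>Sg. H (fl {1..\<kappa>} \<sigma>)) = (\<Sum>\<sigma>\<in>Sg. H \<sigma>)" by (rule sum_fl) simp
  finally show ?thesis by simp
qed

lemma pair_ne:
  assumes y: "y \<in> {1..\<kappa>}" and y': "y' \<in> {1..\<kappa>}" and ne: "y \<noteq> y'"
  shows "card Sg * (h (D y y') + h (D y' y)) \<le> 2 * (\<Sum>\<sigma>\<in>Sg. H \<sigma>)"
proof -
  define g where "g a b = h (\<lambda>k. if k = y then 2 * a else if k = y' then 2 * b else 0)" for a b :: real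
  define G where "G \<sigma> = g (\<sigma> y) (\<sigma> y')" for \<sigma> :: "nat \<Rightarrow> real"
  define Q where "Q = (g 1 1 + g (-1) 1 + g 1 (-1) + g (-1) (-1)) / 4"
  define Oth where "Oth = {1..\<kappa>} - {y, y'}"
  have a: "\<forall>\<sigma>\<in>Sg. G \<sigma> \<le> (H \<sigma> + H (fl Oth \<sigma>)) / 2"
  proof
    fix \<sigma> assume "\<sigma> \<in> Sg"
    have "G \<sigma> = h (\<lambda>k. (2 * \<sigma> k + 2 * fl Oth \<sigma> k) / 2)"
      unfolding G_def g_def by (rule h_cong) (use ne in \<open>auto simp: fl_def Oth_def\<close>)
    also have "\<dots> \<le> (H \<sigma> + H (fl Oth \<sigma>)) / 2" unfolding H_def by (rule h_mid)
    finally show "G \<sigma> \<le> (H \<sigma> + H (fl Oth \<sigma>)) / 2" .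
  qed
  have "(\<Sum>\<sigma>\<in>Sg. G \<sigma>) \<le> (\<Sum>\<sigma>\<in>Sg. (H \<sigma> + H (fl Oth \<sigma>)) / 2)"
    using a by (intro sum_mono) blast
  also have "\<dots> = ((\<Sum>\<sigma>\<in>Sg. H \<sigma>) + (\<Sum>\<sigma>\<in>Sg. H (fl Oth \<sigma>))) / 2"
    by (simp add: sum.distrib sum_divide_distrib[symmetric])
  also have "(\<Sum>\<sigma>\<in>Sg. H (fl Oth \<sigma>)) = (\<Sum>\<sigma>\<in>Sg. H \<sigma>)" by (rule sum_fl) (auto simp: Oth_def)
  finally have GH: "(\<Sum>\<sigma>\<in>Sg. G \<sigma>) \<le> (\<Sum>\<sigma>\<in>Sg. H \<sigma>)" by simp
  have b: "\<forall>\<sigma>\<in>Sg. G \<sigma> + G (fl {y} \<sigma>) + G (fl {y'} \<sigma>) + G (fl {y} (fl {y'} \<sigma>)) = 4 * Q"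
  proof
    fix \<sigma> assume s: "\<sigma> \<in> Sg"
    have "\<sigma> y \<in> {-1, 1}" "\<sigma> y' \<in> {-1, 1}" using s y y' by (auto simp: PiE_iff)
    then show "G \<sigma> + G (fl {y} \<sigma>) + G (fl {y'} \<sigma>) + G (fl {y} (fl {y'} \<sigma>)) = 4 * Q"
      using ne by (auto simp: G_def Q_def fl_def)
  qed
  have s1: "(\<Sum>\<sigma>\<in>Sg. G (fl {y} \<sigma>)) = (\<Sum>\<sigma>\<in>Sg. G \<sigma>)" by (rule sum_fl) (use y in auto)
  have s2: "(\<Sum>\<sigma>\<in>Sg. G (fl {y'} \<sigma>)) = (\<Sum>\<sigma>\<in>Sg. G \<sigma>)" by (rule sum_fl) (use y' in auto)
  have s3: "(\<Sum>\<sigma>\<in>Sg. G (fl {y} (fl {y'} \<sigma>))) = (\<Sum>\<sigma>\<in>Sg. G (fl {y} \<sigma>))"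
    by (rule sum_fl[where f="\<lambda>\<sigma>. G (fl {y} \<sigma>)"]) (use y' in auto)
  have "4 * (\<Sum>\<sigma>\<in>Sg. G \<sigma>) = (\<Sum>\<sigma>\<in>Sg. G \<sigma> + G (fl {y} \<sigma>) + G (fl {y'} \<sigma>) + G (fl {y} (fl {y'} \<sigma>)))"
    unfolding sum.distrib s1 s2 s3 by simp
  also have "\<dots> = (\<Sum>\<sigma>\<in>Sg. 4 * Q)" using b by (intro sum.cong) auto
  finally have GQ: "(\<Sum>\<sigma>\<in>Sg. G \<sigma>) = card Sg * Q" by simp
  have c0: "h (\<lambda>k. 0) \<le> (g 1 1 + g (-1) (-1)) / 2"
  proof -
    have "h (\<lambda>k. 0) = h (\<lambda>k. ((if k = y then 2 * 1 else if k = y' then 2 * 1 else 0)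
        + (if k = y then 2 * (-1) else if k = y' then 2 * (-1) else 0)) / 2)"
      by (rule h_cong) auto
    also have "\<dots> \<le> (g 1 1 + g (-1) (-1)) / 2" unfolding g_def by (rule h_mid)
    finally show ?thesis .
  qed
  have c1: "h (D y y') \<le> (g 1 (-1) + h (\<lambda>k. 0)) / 2"
  proof -
    have "h (D y y') = h (\<lambda>k. ((if k = y then 2 * 1 else if k = y' then 2 * (-1) else 0) + 0) / 2)"
      by (rule h_cong) (use ne in \<open>auto simp: D_def\<close>)
    also have "\<dots> \<le> (g 1 (-1) + h (\<lambda>k. 0)) / 2" unfolding g_def by (rule h_mid)
    finally show ?thesis .
  qed
  have c2: "h (D y' y) \<le> (g (-1) 1 + h (\<lambda>k. 0)) / 2"
  proof -
    have "h (D y' y) = h (\<lambda>k. ((if k = y then 2 * (-1) else if k = y' then 2 * 1 else 0) + 0) / 2)"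
      by (rule h_cong) (use ne in \<open>auto simp: D_def\<close>)
    also have "\<dots> \<le> (g (-1) 1 + h (\<lambda>k. 0)) / 2" unfolding g_def by (rule h_mid)
    finally show ?thesis .
  qed
  have "h (D y y') + h (D y' y) \<le> (g 1 (-1) + g (-1) 1) / 2 + h (\<lambda>k. 0)" using add_mono[OF c1 c2] by (simp add: field_simps)
  also have "\<dots> \<le> 2 * Q" using c0 unfolding Q_def by (simp add: field_simps)
  finally have "h (D y y') + h (D y' y) \<le> 2 * Q" .
  then have "card Sg * (h (D y y') + h (D y' y)) \<le> card Sg * (2 * Q)"
    by (rule mult_left_mono) simp
  also have "\<dots> = 2 * (\<Sum>\<sigma>\<in>Sg. G \<sigma>)" using GQ by simp
  finally show ?thesis using GH by linarith
qed

lemma pair: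
  assumes y: "y \<in> {1..\<kappa>}" and y': "y' \<in> {1..\<kappa>}"
  shows "card Sg * (h (D y y') + h (D y' y)) \<le> 2 * (\<Sum>\<sigma>\<in>Sg. H \<sigma>)"
proof (cases "y = y'")
  case True
  have "D y y = (\<lambda>k. 0)" by (auto simp: D_def)
  then show ?thesis using True h0_le by (simp add: algebra_simps)
next
  case False then show ?thesis using pair_ne y y' by blast
qed


lemma Y_bound:
  assumes Y: "Y \<subseteq> {1..\<kappa>}" "Y \<noteq> {}"
  shows "(\<Sum>y\<in>Y. h (e y)) \<le> 1 + card Y * ((\<Sum>\<sigma>\<in>Sg. H \<sigma>) / card Sg)"
proof -
  have finY: "finite Y" using Y finite_subset by blast
  define n where "n = real (card Y)"
  have n0: "n > 0" using Y finY by (simp add: n_def card_gt_0_iff)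
  have step1: "h (e y) \<le> h (\<lambda>k. (\<Sum>y'\<in>Y. D y y' k) / card Y) + 1 / n" if yY: "y \<in> Y" for y
  proof (rule h_le)
    fix M assume M: "M \<in> Ms"
    have yK: "y \<in> {1..\<kappa>}" using yY Y by auto
    have "(\<Sum>k\<in>{1..\<kappa>}. e y k * u M k) = (\<Sum>k\<in>{1..\<kappa>}. if k = y then u M k else 0)"
      by (rule sum.cong) (auto simp: e_def)
    also have "\<dots> = u M y" using yK by simp
    finally have e1: "(\<Sum>k\<in>{1..\<kappa>}. e y k * u M k) = u M y" .
    have D1: "(\<Sum>k\<in>{1..\<kappa>}. D y y' k * u M k) = u M y - u M y'" if "y' \<in> Y" for y'
    proof -
      have y'K: "y' \<in> {1..\<kappa>}" using that Y by auto
      have "(\<Sum>k\<in>{1..\<kappa>}. D y y' k * u M k) = (\<Sum>k\<in>{1..\<kappa>}. (if k = y then u M k else 0) - (if k = y' then u M k else 0))"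
        by (rule sum.cong) (auto simp: D_def)
      also have "\<dots> = u M y - u M y'" using yK y'K by (simp add: sum_subtractf)
      finally show ?thesis .
    qed
    have "(\<Sum>k\<in>{1..\<kappa>}. (\<Sum>y'\<in>Y. D y y' k) / card Y * u M k)
        = (\<Sum>y'\<in>Y. \<Sum>k\<in>{1..\<kappa>}. D y y' k * u M k) / n"
      unfolding n_def by (simp add: sum_divide_distrib sum_distrib_right) (rule sum.swap)
    also have "\<dots> = (\<Sum>y'\<in>Y. u M y - u M y') / n" using D1 by simp
    also have "\<dots> = u M y - (\<Sum>y'\<in>Y. u M y') / n"
      using n0 by (simp add: sum_subtractf n_def field_simps)
    finally have eq: "(\<Sum>k\<in>{1..\<kappa>}. (\<Sum>y'\<in>Y. D y y' k) / card Y * u M k) = u M y - (\<Sum>y'\<in>Y. u M y') / n" .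
    have "(\<Sum>y'\<in>Y. u M y') \<le> (\<Sum>k\<in>{1..\<kappa>}. u M k)"
      by (rule sum_mono2) (use Y u01 M in auto)
    also have "\<dots> \<le> 1" using usum M by auto
    finally have "(\<Sum>y'\<in>Y. u M y') / n \<le> 1 / n" using n0 by (simp add: divide_right_mono)
    then have "A M + (\<Sum>k\<in>{1..\<kappa>}. e y k * u M k)
        \<le> A M + (\<Sum>k\<in>{1..\<kappa>}. (\<Sum>y'\<in>Y. D y y' k) / card Y * u M k) + 1 / n"
      using e1 eq by linarith
    also have "\<dots> \<le> h (\<lambda>k. (\<Sum>y'\<in>Y. D y y' k) / card Y) + 1 / n"
      using h_ge[OF M, of "\<lambda>k. (\<Sum>y'\<in>Y. D y y' k) / card Y"] by linarith
    finally show "A M + (\<Sum>k\<in>{1..\<kappa>}. e y k * u M k) \<le> h (\<lambda>k. (\<Sum>y'\<in>Y. D y y' k) / card Y) + 1 / n" .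
  qed
  have step2: "h (\<lambda>k. (\<Sum>y'\<in>Y. D y y' k) / card Y) \<le> (\<Sum>y'\<in>Y. h (D y y')) / n" for y
    unfolding n_def by (rule h_jensen[OF finY Y(2)])
  have "(\<Sum>y\<in>Y. h (e y)) \<le> (\<Sum>y\<in>Y. (\<Sum>y'\<in>Y. h (D y y')) / n + 1 / n)"
  proof (rule sum_mono)
    fix y assume "y \<in> Y"
    from step1[OF this] step2[of y]
    show "h (e y) \<le> (\<Sum>y'\<in>Y. h (D y y')) / n + 1 / n" by linarith
  qed
  also have "\<dots> = (\<Sum>y\<in>Y. \<Sum>y'\<in>Y. h (D y y')) / n + 1"
    using n0 by (simp add: sum.distrib sum_divide_distrib[symmetric] n_def)
  finally have I1: "(\<Sum>y\<in>Y. h (e y)) \<le> (\<Sum>y\<in>Y. \<Sum>y'\<in>Y. h (D y y')) / n + 1" .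
  define T where "T = (\<Sum>\<sigma>\<in>Sg. H \<sigma>)"
  have "2 * (\<Sum>y\<in>Y. \<Sum>y'\<in>Y. h (D y y')) = (\<Sum>y\<in>Y. \<Sum>y'\<in>Y. h (D y y') + h (D y' y))"
  proof -
    have "(\<Sum>y\<in>Y. \<Sum>y'\<in>Y. h (D y' y)) = (\<Sum>y\<in>Y. \<Sum>y'\<in>Y. h (D y y'))"
      by (rule sum.swap)
    then show ?thesis by (simp only: sum.distrib)
  qed
  then have "card Sg * (2 * (\<Sum>y\<in>Y. \<Sum>y'\<in>Y. h (D y y')))
       = (\<Sum>y\<in>Y. \<Sum>y'\<in>Y. card Sg * (h (D y y') + h (D y' y)))"
    by (simp add: sum_distrib_left)
  also have "\<dots> \<le> (\<Sum>y\<in>Y. \<Sum>y'\<in>Y. 2 * T)"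
    unfolding T_def by (intro sum_mono pair) (use Y in auto)
  also have "\<dots> = n * n * (2 * T)" by (simp add: n_def)
  finally have "(\<Sum>y\<in>Y. \<Sum>y'\<in>Y. h (D y y')) \<le> n * n * (T / card Sg)"
    using Sg_card by (simp add: field_simps)
  then have "(\<Sum>y\<in>Y. \<Sum>y'\<in>Y. h (D y y')) / n \<le> n * (T / card Sg)"
    using n0 by (simp add: field_simps)
  then show ?thesis using I1 unfolding T_def n_def by linarith
qed

lemma q_exists:
  "\<exists>q\<in>simplex \<kappa>. \<forall>y\<in>{1..\<kappa>}. exp_loss \<kappa> q y + h (e y) \<le> 1 + (\<Sum>\<sigma>\<in>Sg. H \<sigma>) / card Sg"
proof -
  define c where "c = (\<Sum>\<sigma>\<in>Sg. H \<sigma>) / card Sg"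
  define r where "r y = max 0 (h (e y) - c)" for y
  define Y where "Y = {y\<in>{1..\<kappa>}. h (e y) > c}"
  define s where "s = (\<Sum>k\<in>{1..\<kappa>}. r k)"
  have sY: "s = (\<Sum>y\<in>Y. h (e y) - c)"
  proof -
    have "s = (\<Sum>y\<in>Y. r y)" unfolding s_def
      by (rule sum.mono_neutral_cong_right) (auto simp: Y_def r_def)
    also have "\<dots> = (\<Sum>y\<in>Y. h (e y) - c)" by (rule sum.cong) (auto simp: Y_def r_def)
    finally show ?thesis .
  qed
  have s1: "s \<le> 1"
  proof (cases "Y = {}")
    case True then show ?thesis using sY by simp
  next
    case False
    have "Y \<subseteq> {1..\<kappa>}" by (auto simp: Y_def)
    from Y_bound[OF this False] show ?thesis
      using sY by (simp add: sum_subtractf c_def)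
  qed
  have s0: "0 \<le> s" unfolding s_def r_def by (rule sum_nonneg) simp
  define q where "q k = (if k \<in> {1..\<kappa>} then r k + (1 - s) / \<kappa> else 0)" for k
  have kpos: "real \<kappa> > 0" using kp by simp
  have qs: "q \<in> simplex \<kappa>"
  proof -
    have "\<forall>k. 0 \<le> q k" using s1 kpos by (auto simp: q_def r_def)
    moreover have "(\<Sum>k\<in>{1..\<kappa>}. q k) = 1"
    proof -
      have "(\<Sum>k\<in>{1..\<kappa>}. q k) = (\<Sum>k\<in>{1..\<kappa>}. r k + (1 - s) / \<kappa>)"
        by (rule sum.cong) (auto simp: q_def)
      also have "\<dots> = s + (1 - s)" using kpos by (simp add: sum.distrib s_def)
      finally show ?thesis by simp
    qed
    ultimately show ?thesis by (auto simp: simplex_def q_def)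
  qed
  have "\<forall>y\<in>{1..\<kappa>}. exp_loss \<kappa> q y + h (e y) \<le> 1 + c"
  proof
    fix y assume y: "y \<in> {1..\<kappa>}"
    have "exp_loss \<kappa> q y = 1 - q y" by (rule exp_loss_simplex[OF qs y])
    moreover have "q y \<ge> r y" using y s1 kpos by (simp add: q_def)
    moreover have "r y \<ge> h (e y) - c" by (simp add: r_def)
    ultimately show "exp_loss \<kappa> q y + h (e y) \<le> 1 + c" by linarith
  qed
  then show ?thesis using qs unfolding c_def by blast
qed

end



definition mg :: "nat \<Rightarrow> (nat \<Rightarrow> real) \<Rightarrow> (nat \<times> nat \<Rightarrow> real) \<Rightarrow> nat \<times> nat \<Rightarrow> real" where
  "mg t \<sigma> \<epsilon> = (\<lambda>(j, k). if j = t then \<sigma> k else \<epsilon> (j, k))"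

lemma mg_bij:
  assumes "t \<le> V"
  shows "bij_betw (\<lambda>(\<epsilon>, \<sigma>). mg t \<sigma> \<epsilon>)
    (PiE ({Suc t..V} \<times> {1..\<kappa>}) (\<lambda>_. {-1,1::real}) \<times> PiE {1..\<kappa>} (\<lambda>_. {-1,1::real}))
    (PiE ({t..V} \<times> {1..\<kappa>}) (\<lambda>_. {-1,1::real}))"
proof (rule bij_betw_byWitness[where f'="\<lambda>\<epsilon>. (\<lambda>(j, k). if j = t then undefined else \<epsilon> (j, k), \<lambda>k. \<epsilon> (t, k))"])
  show "\<forall>a\<in>PiE ({Suc t..V} \<times> {1..\<kappa>}) (\<lambda>_. {-1,1::real}) \<times> PiE {1..\<kappa>} (\<lambda>_. {-1,1::real}).
    (\<lambda>\<epsilon>. (\<lambda>(j, k). if j = t then undefined else \<epsilon> (j, k), \<lambda>k. \<epsilon> (t, k))) ((\<lambda>(\<epsilon>, \<sigma>). mg t \<sigma> \<epsilon>) a) = a"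
    by (auto simp: mg_def PiE_iff extensional_def fun_eq_iff)
  show "\<forall>a'\<in>PiE ({t..V} \<times> {1..\<kappa>}) (\<lambda>_. {-1,1::real}).
    (\<lambda>(\<epsilon>, \<sigma>). mg t \<sigma> \<epsilon>) ((\<lambda>\<epsilon>. (\<lambda>(j, k). if j = t then undefined else \<epsilon> (j, k), \<lambda>k. \<epsilon> (t, k))) a') = a'"
    by (auto simp: mg_def PiE_iff extensional_def fun_eq_iff)
  show "(\<lambda>(\<epsilon>, \<sigma>). mg t \<sigma> \<epsilon>) ` (PiE ({Suc t..V} \<times> {1..\<kappa>}) (\<lambda>_. {-1,1::real}) \<times> PiE {1..\<kappa>} (\<lambda>_. {-1,1::real}))
    \<subseteq> PiE ({t..V} \<times> {1..\<kappa>}) (\<lambda>_. {-1,1::real})"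
  proof clarify
    fix \<epsilon> \<sigma> assume e: "\<epsilon> \<in> PiE ({Suc t..V} \<times> {1..\<kappa>}) (\<lambda>_. {-1,1::real})"
      and s: "\<sigma> \<in> PiE {1..\<kappa>} (\<lambda>_. {-1,1::real})"
    show "mg t \<sigma> \<epsilon> \<in> PiE ({t..V} \<times> {1..\<kappa>}) (\<lambda>_. {-1,1::real})"
      unfolding PiE_iff extensional_def
    proof (intro conjI ballI allI impI CollectI)
      fix p assume p: "p \<in> {t..V} \<times> {1..\<kappa>}"
      obtain j k where pj: "p = (j, k)" by (cases p)
      show "mg t \<sigma> \<epsilon> p \<in> {-1, 1}"
      proof (cases "j = t")
        case True then show ?thesis using PiE_mem[OF s, of k] p pj by (simp add: mg_def)
      next
        case False then show ?thesis using PiE_mem[OF e, of p] p pj by (auto simp: mg_def)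
      qed
    next
      fix p assume p: "p \<notin> {t..V} \<times> {1..\<kappa>}"
      obtain j k where pj: "p = (j, k)" by (cases p)
      show "mg t \<sigma> \<epsilon> p = undefined"
      proof (cases "j = t")
        case True then show ?thesis using PiE_arb[OF s, of k] p pj assms by (auto simp: mg_def)
      next
        case False then show ?thesis using PiE_arb[OF e, of p] p pj by (auto simp: mg_def)
      qed
    qed
  qed
  show "(\<lambda>\<epsilon>. (\<lambda>(j, k). if j = t then undefined else \<epsilon> (j, k), \<lambda>k. \<epsilon> (t, k))) ` PiE ({t..V} \<times> {1..\<kappa>}) (\<lambda>_. {-1,1::real})
    \<subseteq> PiE ({Suc t..V} \<times> {1..\<kappa>}) (\<lambda>_. {-1,1::real}) \<times> PiE {1..\<kappa>} (\<lambda>_. {-1,1::real})"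
  proof
    fix z assume "z \<in> (\<lambda>\<epsilon>. (\<lambda>(j, k). if j = t then undefined else \<epsilon> (j, k), \<lambda>k. \<epsilon> (t, k))) ` PiE ({t..V} \<times> {1..\<kappa>}) (\<lambda>_. {-1,1::real})"
    then obtain \<epsilon> where e: "\<epsilon> \<in> PiE ({t..V} \<times> {1..\<kappa>}) (\<lambda>_. {-1,1::real})"
      and z: "z = (\<lambda>(j, k). if j = t then undefined else \<epsilon> (j, k), \<lambda>k. \<epsilon> (t, k))" by blast
    have e1: "\<epsilon> (j, k) \<in> {-1, 1}" if "t \<le> j" "j \<le> V" "k \<in> {1..\<kappa>}" for j k
      using PiE_mem[OF e, of "(j, k)"] that by auto
    have e2: "\<epsilon> (j, k) = undefined" if "\<not> (t \<le> j \<and> j \<le> V \<and> k \<in> {1..\<kappa>})" for j k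
      using PiE_arb[OF e, of "(j, k)"] that by auto
    have z1: "(\<lambda>(j, k). if j = t then undefined else \<epsilon> (j, k)) \<in> PiE ({Suc t..V} \<times> {1..\<kappa>}) (\<lambda>_. {-1,1::real})"
      unfolding PiE_iff extensional_def
    proof (intro conjI ballI allI impI CollectI)
      fix p assume p: "p \<in> {Suc t..V} \<times> {1..\<kappa>}"
      obtain j k where pj: "p = (j, k)" by (cases p)
      show "(case p of (j, k) \<Rightarrow> if j = t then undefined else \<epsilon> (j, k)) \<in> {-1, 1}"
        using p pj e1[of j k] by auto
    next
      fix p assume p: "p \<notin> {Suc t..V} \<times> {1..\<kappa>}"
      obtain j k where pj: "p = (j, k)" by (cases p)
      show "(case p of (j, k) \<Rightarrow> if j = t then undefined else \<epsilon> (j, k)) = undefined"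
        using p pj e2[of j k] by auto
    qed
    have z2: "(\<lambda>k. \<epsilon> (t, k)) \<in> PiE {1..\<kappa>} (\<lambda>_. {-1,1::real})"
      unfolding PiE_iff extensional_def using e1 e2 assms by auto
    show "z \<in> PiE ({Suc t..V} \<times> {1..\<kappa>}) (\<lambda>_. {-1,1::real}) \<times> PiE {1..\<kappa>} (\<lambda>_. {-1,1::real})"
      using z1 z2 z by simp
  qed
qed

lemma avg_split:
  assumes "t \<le> V"
  shows "(\<Sum>\<epsilon>\<in>PiE ({t..V} \<times> {1..\<kappa>}) (\<lambda>_. {-1,1::real}). F \<epsilon>) / card (PiE ({t..V} \<times> {1..\<kappa>}) (\<lambda>_. {-1,1::real}))
    = (\<Sum>\<epsilon>\<in>PiE ({Suc t..V} \<times> {1..\<kappa>}) (\<lambda>_. {-1,1::real}).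
         (\<Sum>\<sigma>\<in>PiE {1..\<kappa>} (\<lambda>_. {-1,1::real}). F (mg t \<sigma> \<epsilon>)) / card (PiE {1..\<kappa>} (\<lambda>_. {-1,1::real})))
      / card (PiE ({Suc t..V} \<times> {1..\<kappa>}) (\<lambda>_. {-1,1::real}))"
proof -
  let ?R = "PiE ({Suc t..V} \<times> {1..\<kappa>}) (\<lambda>_. {-1,1::real})"
  let ?S = "PiE {1..\<kappa>} (\<lambda>_. {-1,1::real})"
  let ?T = "PiE ({t..V} \<times> {1..\<kappa>}) (\<lambda>_. {-1,1::real})"
  note b = mg_bij[OF assms, of \<kappa>]
  have "(\<Sum>\<epsilon>\<in>?T. F \<epsilon>) = (\<Sum>x\<in>?R \<times> ?S. F ((\<lambda>(\<epsilon>, \<sigma>). mg t \<sigma> \<epsilon>) x))"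
    by (rule sum.reindex_bij_betw[OF b, symmetric])
  also have "\<dots> = (\<Sum>\<epsilon>\<in>?R. \<Sum>\<sigma>\<in>?S. F (mg t \<sigma> \<epsilon>))"
    unfolding sum.cartesian_product by (rule sum.cong) auto
  finally have s: "(\<Sum>\<epsilon>\<in>?T. F \<epsilon>) = (\<Sum>\<epsilon>\<in>?R. \<Sum>\<sigma>\<in>?S. F (mg t \<sigma> \<epsilon>))" .
  have c: "card ?T = card ?R * card ?S"
    using bij_betw_same_card[OF b] by (simp add: card_cartesian_product)
  show ?thesis unfolding s c by (simp add: sum_divide_distrib mult.commute)
qed


lemma mul_le_abs: "0 \<le> (b::real) \<Longrightarrow> b \<le> 1 \<Longrightarrow> a * b \<le> \<bar>a\<bar>"
proof -
  assume b: "0 \<le> b" "b \<le> 1"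
  have "a * b \<le> \<bar>a\<bar> * b" using b by (intro mult_right_mono) simp_all
  also have "\<dots> \<le> \<bar>a\<bar>" using b by (intro mult_left_le) simp_all
  finally show ?thesis .
qed

lemma per_eps:
  fixes Ms :: "(nat \<Rightarrow> nat \<Rightarrow> real) set"
  assumes kp: "1 \<le> \<kappa>" and ne: "Ms \<noteq> {}"
    and M_entries: "\<forall>M\<in>Ms. \<forall>t\<in>{1..V}. \<forall>k\<in>{1..\<kappa>}. 0 \<le> M t k \<and> M t k \<le> 1"
    and M_rows: "\<forall>M\<in>Ms. \<forall>t\<in>{1..V}. (\<Sum>k\<in>{1..\<kappa>}. M t k) \<le> 1"
    and nV: "Suc n \<le> V" and len: "length ys = n" and ys: "set ys \<subseteq> {1..\<kappa>}"
  shows "\<exists>q\<in>simplex \<kappa>. \<forall>y\<in>{1..\<kappa>}. exp_loss \<kappa> q y + (SUP M\<in>Ms. rel_obj V \<kappa> \<epsilon> (ys @ [y]) M)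
     \<le> 1 + (\<Sum>\<sigma>\<in>PiE {1..\<kappa>} (\<lambda>_. {-1,1::real}). SUP M\<in>Ms. rel_obj V \<kappa> (mg (Suc n) \<sigma> \<epsilon>) ys M)
           / card (PiE {1..\<kappa>} (\<lambda>_. {-1,1::real}))"
proof -
  define A where "A M = 2 * (\<Sum>j\<in>{Suc (Suc n)..V}. \<Sum>k\<in>{1..\<kappa>}. \<epsilon> (j, k) * M j k)
      + (\<Sum>i\<in>{1..n}. M i (ys ! (i - 1)))" for M :: "nat \<Rightarrow> nat \<Rightarrow> real"
  have R1: "rel_obj V \<kappa> \<epsilon> (ys @ [y]) M = A M + M (Suc n) y" for y M
  proof -
    have "(\<Sum>i\<in>{1..Suc n}. M i ((ys @ [y]) ! (i - 1)))
        = (\<Sum>i\<in>{1..n}. M i ((ys @ [y]) ! (i - 1))) + M (Suc n) ((ys @ [y]) ! n)"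
      by simp
    also have "(\<Sum>i\<in>{1..n}. M i ((ys @ [y]) ! (i - 1))) = (\<Sum>i\<in>{1..n}. M i (ys ! (i - 1)))"
      by (rule sum.cong) (auto simp: nth_append len)
    finally have "(\<Sum>i\<in>{1..Suc n}. M i ((ys @ [y]) ! (i - 1))) = (\<Sum>i\<in>{1..n}. M i (ys ! (i - 1))) + M (Suc n) y"
      using len by (simp add: nth_append)
    then show ?thesis unfolding rel_obj_def A_def using len by simp
  qed
  have R2: "rel_obj V \<kappa> (mg (Suc n) \<sigma> \<epsilon>) ys M = A M + (\<Sum>k\<in>{1..\<kappa>}. 2 * \<sigma> k * M (Suc n) k)" for \<sigma> M
  proof -
    have i: "(\<Sum>j\<in>{Suc (Suc n)..V}. \<Sum>k\<in>{1..\<kappa>}. mg (Suc n) \<sigma> \<epsilon> (j, k) * M j k)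
        = (\<Sum>j\<in>{Suc (Suc n)..V}. \<Sum>k\<in>{1..\<kappa>}. \<epsilon> (j, k) * M j k)"
      by (rule sum.cong) (auto simp: mg_def)
    have "(\<Sum>j\<in>{Suc n..V}. \<Sum>k\<in>{1..\<kappa>}. mg (Suc n) \<sigma> \<epsilon> (j, k) * M j k)
        = (\<Sum>k\<in>{1..\<kappa>}. \<sigma> k * M (Suc n) k) + (\<Sum>j\<in>{Suc (Suc n)..V}. \<Sum>k\<in>{1..\<kappa>}. \<epsilon> (j, k) * M j k)"
      using nV by (simp add: sum.atLeast_Suc_atMost i del: sum.cl_ivl_Suc) (simp add: mg_def)
    then show ?thesis unfolding rel_obj_def A_def using len
      by (simp add: sum_distrib_left mult.assoc algebra_simps)
  qed
  have bdd: "bdd_above (A ` Ms)"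
  proof -
    have "A M \<le> 2 * (\<Sum>j\<in>{Suc (Suc n)..V}. \<Sum>k\<in>{1..\<kappa>}. \<bar>\<epsilon> (j, k)\<bar>) + n" if M: "M \<in> Ms" for M
    proof -
      have a: "(\<Sum>j\<in>{Suc (Suc n)..V}. \<Sum>k\<in>{1..\<kappa>}. \<epsilon> (j, k) * M j k)
          \<le> (\<Sum>j\<in>{Suc (Suc n)..V}. \<Sum>k\<in>{1..\<kappa>}. \<bar>\<epsilon> (j, k)\<bar>)"
        by (intro sum_mono mul_le_abs) (use M M_entries in auto)
      have b: "(\<Sum>i\<in>{1..n}. M i (ys ! (i - 1))) \<le> (\<Sum>i\<in>{1..n}. 1)"
      proof (rule sum_mono)
        fix i assume i: "i \<in> {1..n}"
        have "ys ! (i - 1) \<in> set ys" using i len by auto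
        then have "ys ! (i - 1) \<in> {1..\<kappa>}" using ys by auto
        moreover have "i \<in> {1..V}" using i nV by auto
        ultimately show "M i (ys ! (i - 1)) \<le> 1" using M M_entries by auto
      qed
      show ?thesis using a b unfolding A_def by simp
    qed
    then show ?thesis by (auto simp: bdd_above_def)
  qed
  interpret C: core Ms A "\<lambda>M k. M (Suc n) k" \<kappa>
  proof
    show "Ms \<noteq> {}" by (rule ne)
    show "bdd_above (A ` Ms)" by (rule bdd)
    show "\<forall>M\<in>Ms. \<forall>k\<in>{1..\<kappa>}. 0 \<le> M (Suc n) k \<and> M (Suc n) k \<le> 1" using M_entries nV by auto
    show "\<forall>M\<in>Ms. (\<Sum>k\<in>{1..\<kappa>}. M (Suc n) k) \<le> 1" using M_rows nV by auto
    show "1 \<le> \<kappa>" by (rule kp)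
  qed
  obtain q where q: "q \<in> simplex \<kappa>" and
    qb: "\<forall>y\<in>{1..\<kappa>}. exp_loss \<kappa> q y + C.h (C.e y) \<le> 1 + (\<Sum>\<sigma>\<in>PiE {1..\<kappa>} (\<lambda>_. {-1,1::real}). C.H \<sigma>) / card (PiE {1..\<kappa>} (\<lambda>_. {-1,1::real}))"
    using C.q_exists by blast
  have he: "C.h (C.e y) = (SUP M\<in>Ms. rel_obj V \<kappa> \<epsilon> (ys @ [y]) M)" if y: "y \<in> {1..\<kappa>}" for y
  proof -
    have "A M + (\<Sum>k\<in>{1..\<kappa>}. C.e y k * M (Suc n) k) = rel_obj V \<kappa> \<epsilon> (ys @ [y]) M" for M
    proof -
      have "(\<Sum>k\<in>{1..\<kappa>}. C.e y k * M (Suc n) k) = (\<Sum>k\<in>{1..\<kappa>}. if k = y then M (Suc n) k else 0)"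
        by (rule sum.cong) (auto simp: C.e_def)
      also have "\<dots> = M (Suc n) y" using y by simp
      finally show ?thesis using R1 by simp
    qed
    then show ?thesis unfolding C.h_def by simp
  qed
  have hH: "C.H \<sigma> = (SUP M\<in>Ms. rel_obj V \<kappa> (mg (Suc n) \<sigma> \<epsilon>) ys M)" for \<sigma>
    unfolding C.H_def C.h_def R2 by simp
  show ?thesis using q qb he hH by auto
qed


lemma round:
  fixes Ms :: "(nat \<Rightarrow> nat \<Rightarrow> real) set"
  assumes nV: "Suc n \<le> V" and len: "length ys = n"
    and H: "\<forall>\<epsilon>\<in>rad_set V \<kappa> (Suc n). a \<epsilon> + (SUP M\<in>Ms. rel_obj V \<kappa> \<epsilon> (ys @ [y]) M)
       \<le> 1 + (\<Sum>\<sigma>\<in>PiE {1..\<kappa>} (\<lambda>_. {-1,1::real}). SUP M\<in>Ms. rel_obj V \<kappa> (mg (Suc n) \<sigma> \<epsilon>) ys M)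
           / card (PiE {1..\<kappa>} (\<lambda>_. {-1,1::real}))"
  shows "(\<Sum>\<epsilon>\<in>rad_set V \<kappa> (Suc n). a \<epsilon>) / card (rad_set V \<kappa> (Suc n)) + Rel V \<kappa> Ms (ys @ [y]) \<le> Rel V \<kappa> Ms ys"
proof -
  let ?R = "rad_set V \<kappa> (Suc n)"
  let ?S = "PiE {1..\<kappa>} (\<lambda>_. {-1,1::real})"
  define c where "c \<epsilon> = (\<Sum>\<sigma>\<in>?S. SUP M\<in>Ms. rel_obj V \<kappa> (mg (Suc n) \<sigma> \<epsilon>) ys M) / card ?S" for \<epsilon>
  define \<Phi> where "\<Phi> \<epsilon> = (SUP M\<in>Ms. rel_obj V \<kappa> \<epsilon> (ys @ [y]) M)" for \<epsilon>
  have cR: "real (card ?R) > 0" by (simp add: rad_set_def card_PiE)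
  have Rel1: "Rel V \<kappa> Ms ys = (\<Sum>\<epsilon>\<in>?R. c \<epsilon>) / card ?R - n"
  proof -
    have "rad_set V \<kappa> (length ys) = PiE ({Suc n..V} \<times> {1..\<kappa>}) (\<lambda>_. {-1,1::real})"
      using len by (simp add: rad_set_def)
    then show ?thesis unfolding Rel_def c_def using avg_split[OF nV, where \<kappa>=\<kappa> and F="\<lambda>\<epsilon>. SUP M\<in>Ms. rel_obj V \<kappa> \<epsilon> ys M"]
      by (simp add: rad_set_def len)
  qed
  have Rel2: "Rel V \<kappa> Ms (ys @ [y]) = (\<Sum>\<epsilon>\<in>?R. \<Phi> \<epsilon>) / card ?R - Suc n"
    unfolding Rel_def \<Phi>_def using len by simp
  have "(\<Sum>\<epsilon>\<in>?R. a \<epsilon> + \<Phi> \<epsilon>) \<le> (\<Sum>\<epsilon>\<in>?R. 1 + c \<epsilon>)"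
    using H unfolding c_def \<Phi>_def by (intro sum_mono) auto
  then have "(\<Sum>\<epsilon>\<in>?R. a \<epsilon>) + (\<Sum>\<epsilon>\<in>?R. \<Phi> \<epsilon>) \<le> card ?R + (\<Sum>\<epsilon>\<in>?R. c \<epsilon>)"
    by (simp add: sum.distrib)
  then have "((\<Sum>\<epsilon>\<in>?R. a \<epsilon>) + (\<Sum>\<epsilon>\<in>?R. \<Phi> \<epsilon>)) / card ?R \<le> (card ?R + (\<Sum>\<epsilon>\<in>?R. c \<epsilon>)) / card ?R"
    using cR by (intro divide_right_mono) auto
  then have "(\<Sum>\<epsilon>\<in>?R. a \<epsilon>) / card ?R + (\<Sum>\<epsilon>\<in>?R. \<Phi> \<epsilon>) / card ?R \<le> 1 + (\<Sum>\<epsilon>\<in>?R. c \<epsilon>) / card ?R"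
    using cR by (simp add: add_divide_distrib)
  then show ?thesis unfolding Rel1 Rel2 by simp
qed

theorem lemma2:
  fixes V \<kappa> :: nat and x :: "nat \<Rightarrow> 'x" and G :: "('x \<Rightarrow> nat) set"
    and Ms :: "(nat \<Rightarrow> nat \<Rightarrow> real) set"
  assumes kappa_pos: "1 \<le> \<kappa>"
    and G_range: "\<forall>f\<in>G. \<forall>z. f z \<in> {1..\<kappa>}"
    and G_ne: "G \<noteq> {}"
    and M_entries: "\<forall>M\<in>Ms. \<forall>t\<in>{1..V}. \<forall>k\<in>{1..\<kappa>}. 0 \<le> M t k \<and> M t k \<le> 1"
    and M_rows: "\<forall>M\<in>Ms. \<forall>t\<in>{1..V}. (\<Sum>k\<in>{1..\<kappa>}. M t k) \<le> 1"
    and MG_sub: "\<forall>f\<in>G. \<exists>M\<in>Ms. \<forall>t\<in>{1..V}. \<forall>k\<in>{1..\<kappa>}.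
                    M t k = (if f (x t) = k then 1 else 0)"
  shows "admissible V \<kappa> x G (Rel V \<kappa> Ms) \<and>
    (\<forall>t\<in>{1..V}. \<forall>ys. length ys = t - 1 \<and> set ys \<subseteq> {1..\<kappa>} \<longrightarrow>
      (\<forall>qhat. (\<forall>\<epsilon>\<in>rad_set V \<kappa> t. qhat \<epsilon> \<in> simplex \<kappa> \<and>
                 (\<forall>q\<in>simplex \<kappa>. strat_obj V \<kappa> Ms ys \<epsilon> (qhat \<epsilon>) \<le> strat_obj V \<kappa> Ms ys \<epsilon> q)) \<longrightarrow>
        Max ((\<lambda>yt. (\<Sum>\<epsilon>\<in>rad_set V \<kappa> t. exp_loss \<kappa> (qhat \<epsilon>) yt) / real (card (rad_set V \<kappa> t))
                   + Rel V \<kappa> Ms (ys @ [yt])) ` {1..\<kappa>})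
          \<le> Rel V \<kappa> Ms ys))"
proof -
  have ne: "Ms \<noteq> {}" using G_ne MG_sub by blast
  have Kne: "{1..\<kappa>} \<noteq> {}" using kappa_pos by auto
  have part1: "\<forall>ys. length ys = V \<and> set ys \<subseteq> {1..\<kappa>} \<longrightarrow>
        Rel V \<kappa> Ms ys \<ge> - (INF f\<in>G. (\<Sum>t\<in>{1..V}. loss (f (x t)) (ys ! (t - 1))))"
  proof (intro allI impI)
    fix ys :: "nat list" assume ys: "length ys = V \<and> set ys \<subseteq> {1..\<kappa>}"
    have yK: "ys ! (i - 1) \<in> {1..\<kappa>}" if "i \<in> {1..V}" for i
    proof -
      have "ys ! (i - 1) \<in> set ys" using that ys by auto
      then show ?thesis using ys by auto
    qed
    have rs: "rad_set V \<kappa> (length ys) = {\<lambda>_. undefined}" using ys by (simp add: rad_set_def)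
    have RelV: "Rel V \<kappa> Ms ys = (SUP M\<in>Ms. (\<Sum>i\<in>{1..V}. M i (ys ! (i - 1)))) - V"
      unfolding Rel_def rs using ys by (simp add: rel_obj_def)
    have bddM: "bdd_above ((\<lambda>M. \<Sum>i\<in>{1..V}. M i (ys ! (i - 1))) ` Ms)"
    proof -
      have "(\<Sum>i\<in>{1..V}. M i (ys ! (i - 1))) \<le> (\<Sum>i\<in>{1..V}. 1)" if "M \<in> Ms" for M
        by (rule sum_mono) (use that M_entries yK in auto)
      then show ?thesis by (auto simp: bdd_above_def)
    qed
    have "- Rel V \<kappa> Ms ys \<le> (INF f\<in>G. (\<Sum>t\<in>{1..V}. loss (f (x t)) (ys ! (t - 1))))"
    proof (rule cINF_greatest[OF G_ne])
      fix f assume f: "f \<in> G"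
      obtain M where M: "M \<in> Ms" and Mf: "\<forall>t\<in>{1..V}. \<forall>k\<in>{1..\<kappa>}. M t k = (if f (x t) = k then 1 else 0)"
        using MG_sub f by blast
      have "(\<Sum>t\<in>{1..V}. loss (f (x t)) (ys ! (t - 1))) = (\<Sum>t\<in>{1..V}. 1 - M t (ys ! (t - 1)))"
        by (rule sum.cong) (use Mf yK in \<open>auto simp: loss_def\<close>)
      also have "\<dots> = V - (\<Sum>t\<in>{1..V}. M t (ys ! (t - 1)))" by (simp add: sum_subtractf)
      finally have L: "(\<Sum>t\<in>{1..V}. loss (f (x t)) (ys ! (t - 1))) = V - (\<Sum>t\<in>{1..V}. M t (ys ! (t - 1)))" .
      have "(\<Sum>t\<in>{1..V}. M t (ys ! (t - 1))) \<le> (SUP M\<in>Ms. (\<Sum>i\<in>{1..V}. M i (ys ! (i - 1))))"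
        by (rule cSUP_upper[OF M bddM])
      then show "- Rel V \<kappa> Ms ys \<le> (\<Sum>t\<in>{1..V}. loss (f (x t)) (ys ! (t - 1)))"
        unfolding L RelV by linarith
    qed
    then show "Rel V \<kappa> Ms ys \<ge> - (INF f\<in>G. (\<Sum>t\<in>{1..V}. loss (f (x t)) (ys ! (t - 1))))" by linarith
  qed
  let ?S = "PiE {1..\<kappa>} (\<lambda>_. {-1,1::real})"
  have part2: "(INF q\<in>simplex \<kappa>. SUP yt\<in>{1..\<kappa>}. exp_loss \<kappa> q yt + Rel V \<kappa> Ms (ys @ [yt])) \<le> Rel V \<kappa> Ms ys"
    if t: "t \<in> {1..V}" and ys: "length ys = t - 1 \<and> set ys \<subseteq> {1..\<kappa>}" for t ys
  proof -
    obtain n where tn: "t = Suc n" using t by (cases t) auto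
    have nV: "Suc n \<le> V" and len: "length ys = n" and ysK: "set ys \<subseteq> {1..\<kappa>}" using t ys tn by auto
    let ?R = "rad_set V \<kappa> (Suc n)"
    define P where "P \<epsilon> q \<longleftrightarrow> q \<in> simplex \<kappa> \<and> (\<forall>y\<in>{1..\<kappa>}. exp_loss \<kappa> q y + (SUP M\<in>Ms. rel_obj V \<kappa> \<epsilon> (ys @ [y]) M)
     \<le> 1 + (\<Sum>\<sigma>\<in>?S. SUP M\<in>Ms. rel_obj V \<kappa> (mg (Suc n) \<sigma> \<epsilon>) ys M) / card ?S)" for \<epsilon> q
    define Q where "Q \<epsilon> = (SOME q. P \<epsilon> q)" for \<epsilon>
    have PQ: "P \<epsilon> (Q \<epsilon>)" for \<epsilon>
    proof -
      have "\<exists>q. P \<epsilon> q" using per_eps[OF kappa_pos ne M_entries M_rows nV len ysK, of \<epsilon>]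
        unfolding P_def by blast
      then show ?thesis unfolding Q_def by (rule someI_ex)
    qed
    have Qs: "Q \<epsilon> \<in> simplex \<kappa>" for \<epsilon> using PQ[of \<epsilon>] unfolding P_def by (rule conjunct1)
    have Qb: "\<forall>y\<in>{1..\<kappa>}. exp_loss \<kappa> (Q \<epsilon>) y + (SUP M\<in>Ms. rel_obj V \<kappa> \<epsilon> (ys @ [y]) M)
     \<le> 1 + (\<Sum>\<sigma>\<in>?S. SUP M\<in>Ms. rel_obj V \<kappa> (mg (Suc n) \<sigma> \<epsilon>) ys M) / card ?S" for \<epsilon>
      using PQ[of \<epsilon>] unfolding P_def by (rule conjunct2)
    have cR: "real (card ?R) > 0" by (simp add: rad_set_def card_PiE)
    have finR: "finite ?R" by (simp add: rad_set_def finite_PiE)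
    define qb where "qb k = (\<Sum>\<epsilon>\<in>?R. Q \<epsilon> k) / card ?R" for k
    have qbs: "qb \<in> simplex \<kappa>"
    proof -
      have "\<forall>k. 0 \<le> qb k" unfolding qb_def using Qs
        by (auto simp: simplex_def intro!: divide_nonneg_nonneg sum_nonneg)
      moreover have "\<forall>k. k \<notin> {1..\<kappa>} \<longrightarrow> qb k = 0" unfolding qb_def using Qs
        by (simp add: simplex_def)
      moreover have "(\<Sum>k\<in>{1..\<kappa>}. qb k) = 1"
      proof -
        have "(\<Sum>k\<in>{1..\<kappa>}. qb k) = (\<Sum>\<epsilon>\<in>?R. \<Sum>k\<in>{1..\<kappa>}. Q \<epsilon> k) / card ?R"
        proof -
          have sw: "(\<Sum>k\<in>{1..\<kappa>}. \<Sum>\<epsilon>\<in>?R. Q \<epsilon> k) = (\<Sum>\<epsilon>\<in>?R. \<Sum>k\<in>{1..\<kappa>}. Q \<epsilon> k)"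
            by (rule sum.swap)
          show ?thesis unfolding qb_def sum_divide_distrib[symmetric] sw ..
        qed
        also have "\<dots> = (\<Sum>\<epsilon>\<in>?R. 1) / card ?R" using Qs by (simp add: simplex_def)
        finally show ?thesis using cR by simp
      qed
      ultimately show ?thesis by (simp add: simplex_def)
    qed
    have el: "exp_loss \<kappa> qb y = (\<Sum>\<epsilon>\<in>?R. exp_loss \<kappa> (Q \<epsilon>) y) / card ?R" for y
    proof -
      have sw: "(\<Sum>k\<in>{1..\<kappa>}. \<Sum>\<epsilon>\<in>?R. Q \<epsilon> k * loss k y) = (\<Sum>\<epsilon>\<in>?R. \<Sum>k\<in>{1..\<kappa>}. Q \<epsilon> k * loss k y)"
        by (rule sum.swap)
      show ?thesis unfolding exp_loss_def qb_def
        by (simp only: sum_divide_distrib[symmetric] sum_distrib_right times_divide_eq_left sw)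
    qed
    have each: "exp_loss \<kappa> qb y + Rel V \<kappa> Ms (ys @ [y]) \<le> Rel V \<kappa> Ms ys" if y: "y \<in> {1..\<kappa>}" for y
      unfolding el by (rule round[OF nV len]) (use Qb y in blast)
    have sup: "(SUP yt\<in>{1..\<kappa>}. exp_loss \<kappa> qb yt + Rel V \<kappa> Ms (ys @ [yt])) \<le> Rel V \<kappa> Ms ys"
      by (rule cSUP_least[OF Kne each])
    have bddb: "bdd_below ((\<lambda>q. SUP yt\<in>{1..\<kappa>}. exp_loss \<kappa> q yt + Rel V \<kappa> Ms (ys @ [yt])) ` simplex \<kappa>)"
    proof (rule bdd_belowI2)
      fix q assume q: "q \<in> simplex \<kappa>"
      have "0 \<le> exp_loss \<kappa> q 1" using q unfolding exp_loss_def simplex_def loss_def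
        by (auto intro!: sum_nonneg)
      moreover have "exp_loss \<kappa> q 1 + Rel V \<kappa> Ms (ys @ [1]) \<le> (SUP yt\<in>{1..\<kappa>}. exp_loss \<kappa> q yt + Rel V \<kappa> Ms (ys @ [yt]))"
        by (rule cSUP_upper) (use kappa_pos in \<open>auto intro: bdd_above_finite\<close>)
      ultimately show "Rel V \<kappa> Ms (ys @ [1]) \<le> (SUP yt\<in>{1..\<kappa>}. exp_loss \<kappa> q yt + Rel V \<kappa> Ms (ys @ [yt]))"
        by linarith
    qed
    have "(INF q\<in>simplex \<kappa>. SUP yt\<in>{1..\<kappa>}. exp_loss \<kappa> q yt + Rel V \<kappa> Ms (ys @ [yt]))
        \<le> (SUP yt\<in>{1..\<kappa>}. exp_loss \<kappa> qb yt + Rel V \<kappa> Ms (ys @ [yt]))"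
      by (rule cINF_lower[OF bddb qbs])
    then show ?thesis using sup by linarith
  qed
  have part3: "Max ((\<lambda>yt. (\<Sum>\<epsilon>\<in>rad_set V \<kappa> t. exp_loss \<kappa> (qhat \<epsilon>) yt) / real (card (rad_set V \<kappa> t))
                   + Rel V \<kappa> Ms (ys @ [yt])) ` {1..\<kappa>}) \<le> Rel V \<kappa> Ms ys"
    if t: "t \<in> {1..V}" and ys: "length ys = t - 1 \<and> set ys \<subseteq> {1..\<kappa>}"
      and qh: "\<forall>\<epsilon>\<in>rad_set V \<kappa> t. qhat \<epsilon> \<in> simplex \<kappa> \<and>
                 (\<forall>q\<in>simplex \<kappa>. strat_obj V \<kappa> Ms ys \<epsilon> (qhat \<epsilon>) \<le> strat_obj V \<kappa> Ms ys \<epsilon> q)"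
    for t ys qhat
  proof -
    obtain n where tn: "t = Suc n" using t by (cases t) auto
    have nV: "Suc n \<le> V" and len: "length ys = n" and ysK: "set ys \<subseteq> {1..\<kappa>}" using t ys tn by auto
    have each: "(\<Sum>\<epsilon>\<in>rad_set V \<kappa> t. exp_loss \<kappa> (qhat \<epsilon>) y) / real (card (rad_set V \<kappa> t))
                   + Rel V \<kappa> Ms (ys @ [y]) \<le> Rel V \<kappa> Ms ys" if y: "y \<in> {1..\<kappa>}" for y
      unfolding tn
    proof (rule round[OF nV len], intro ballI)
      fix \<epsilon> assume e: "\<epsilon> \<in> rad_set V \<kappa> (Suc n)"
      define c where "c = (\<Sum>\<sigma>\<in>?S. SUP M\<in>Ms. rel_obj V \<kappa> (mg (Suc n) \<sigma> \<epsilon>) ys M) / card ?S"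
      obtain q where q: "q \<in> simplex \<kappa>" and qb: "\<forall>y\<in>{1..\<kappa>}. exp_loss \<kappa> q y + (SUP M\<in>Ms. rel_obj V \<kappa> \<epsilon> (ys @ [y]) M) \<le> 1 + c"
        using per_eps[OF kappa_pos ne M_entries M_rows nV len ysK, of \<epsilon>] unfolding c_def by blast
      have e': "\<epsilon> \<in> rad_set V \<kappa> t" using e tn by simp
      have qh1: "qhat \<epsilon> \<in> simplex \<kappa>" using qh e' by blast
      have qh2: "strat_obj V \<kappa> Ms ys \<epsilon> (qhat \<epsilon>) \<le> strat_obj V \<kappa> Ms ys \<epsilon> q"
        using qh e' q by blast
      have "strat_obj V \<kappa> Ms ys \<epsilon> q \<le> 1 + c - Suc n"
        unfolding strat_obj_def
      proof (rule cSUP_least[OF Kne])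
        fix yt assume yt: "yt \<in> {1..\<kappa>}"
        show "1 - q yt + (SUP M\<in>Ms. rel_obj V \<kappa> \<epsilon> (ys @ [yt]) M) - real (Suc (length ys)) \<le> 1 + c - Suc n"
          using qb[rule_format, OF yt] exp_loss_simplex[OF q yt] len by simp
      qed
      moreover have "1 - qhat \<epsilon> y + (SUP M\<in>Ms. rel_obj V \<kappa> \<epsilon> (ys @ [y]) M) - real (Suc (length ys))
          \<le> strat_obj V \<kappa> Ms ys \<epsilon> (qhat \<epsilon>)"
        unfolding strat_obj_def by (rule cSUP_upper[OF y]) (auto intro: bdd_above_finite)
      ultimately show "exp_loss \<kappa> (qhat \<epsilon>) y + (SUP M\<in>Ms. rel_obj V \<kappa> \<epsilon> (ys @ [y]) M) \<le> 1 + c"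
        using qh2 exp_loss_simplex[OF qh1 y] len by simp
    qed
    show ?thesis using each Kne by (simp add: Max_le_iff)
  qed
  have p2: "\<forall>t\<in>{1..V}. \<forall>ys. length ys = t - 1 \<and> set ys \<subseteq> {1..\<kappa>} \<longrightarrow>
        (INF q\<in>simplex \<kappa>. SUP yt\<in>{1..\<kappa>}. exp_loss \<kappa> q yt + Rel V \<kappa> Ms (ys @ [yt])) \<le> Rel V \<kappa> Ms ys"
  proof (intro ballI allI impI)
    fix t ys assume "t \<in> {1..V}" "length ys = t - 1 \<and> set ys \<subseteq> {1..\<kappa>}"
    then show "(INF q\<in>simplex \<kappa>. SUP yt\<in>{1..\<kappa>}. exp_loss \<kappa> q yt + Rel V \<kappa> Ms (ys @ [yt])) \<le> Rel V \<kappa> Ms ys"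
      by (rule part2)
  qed
  have adm: "admissible V \<kappa> x G (Rel V \<kappa> Ms)" unfolding admissible_def using part1 p2 by (rule conjI)
  have p3: "\<forall>t\<in>{1..V}. \<forall>ys. length ys = t - 1 \<and> set ys \<subseteq> {1..\<kappa>} \<longrightarrow>
      (\<forall>qhat. (\<forall>\<epsilon>\<in>rad_set V \<kappa> t. qhat \<epsilon> \<in> simplex \<kappa> \<and>
                 (\<forall>q\<in>simplex \<kappa>. strat_obj V \<kappa> Ms ys \<epsilon> (qhat \<epsilon>) \<le> strat_obj V \<kappa> Ms ys \<epsilon> q)) \<longrightarrow>
        Max ((\<lambda>yt. (\<Sum>\<epsilon>\<in>rad_set V \<kappa> t. exp_loss \<kappa> (qhat \<epsilon>) yt) / real (card (rad_set V \<kappa> t))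
                   + Rel V \<kappa> Ms (ys @ [yt])) ` {1..\<kappa>})
          \<le> Rel V \<kappa> Ms ys)"
  proof (intro ballI allI impI)
    fix t ys qhat assume "t \<in> {1..V}" "length ys = t - 1 \<and> set ys \<subseteq> {1..\<kappa>}"
      "\<forall>\<epsilon>\<in>rad_set V \<kappa> t. qhat \<epsilon> \<in> simplex \<kappa> \<and>
                 (\<forall>q\<in>simplex \<kappa>. strat_obj V \<kappa> Ms ys \<epsilon> (qhat \<epsilon>) \<le> strat_obj V \<kappa> Ms ys \<epsilon> q)"
    then show "Max ((\<lambda>yt. (\<Sum>\<epsilon>\<in>rad_set V \<kappa> t. exp_loss \<kappa> (qhat \<epsilon>) yt) / real (card (rad_set V \<kappa> t))
                   + Rel V \<kappa> Ms (ys @ [yt])) ` {1..\<kappa>})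
          \<le> Rel V \<kappa> Ms ys" by (rule part3)
  qed
  show ?thesis using adm p3 by (rule conjI)
qed


end
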